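(* Let $r,k,s_1,\dots,s_k$ be nonnegative integers, $\Gamma$ the complete bipartite supernova quiver with these parameters, and $\boldsymbol\mu=(\mu^1,\dots,\mu^k)$ a $k$-tuple of nonzero partitions with $\mu^i=(\mu^i_1\ge\cdots\ge\mu^i_{s_i+1}\ge0)$. If $\mathbf{v}_{\boldsymbol\mu}$ is an imaginary root of $\Gamma$, then $r\geq|\mu^i|$ for all $i=1,\dots,k$.
   Context: $\Gamma$ has vertex set $I$ consisting of $(l)$, $l=1,\dots,r$, and $(i;j)$, $i=1,\dots,k$, $j=0,\dots,s_i$; edges: one between $(l)$ and $(i;0)$ for every $l,i$ and one between $(i;j)$ and $(i;j-1)$ for $1\le j\le s_i$. $\mathbf{v}_{\boldsymbol\mu}$: $v_{(l)}=1$, $v_{(i;0)}=|\mu^i|$, $v_{(i;j)}=|\mu^i|-\sum_{f=1}^j\mu^i_f$. Bilinear form: $(\mathbf{e}_a,\mathbf{e}_a)=2$, $(\mathbf{e}_a,\mathbf{e}_b)=-$(number of edges joining $a,b$) for $a\ne b$; Weyl group $W$ generated by $s_a(\lambda)=\lambda-(\lambda,\mathbf{e}_a)\mathbf{e}_a$. Imaginary roots are the vectors $\pm w(\delta)$ with $w\in W$ and $\delta$ a nonzero vector in $\mathbb{Z}_{\ge0}^I$ with connected support satisfying $(\mathbf{e}_a,\delta)\le0$ for all $a$. *)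

theory Defs
  imports Main
begin

text \<open>Vertices of the complete bipartite supernova quiver: Lv l is (l), Av i j is (i;j).\<close>
datatype vert = Lv nat | Av nat nat

type_synonym vec = "vert \<Rightarrow> int"

definition verts :: "nat \<Rightarrow> nat \<Rightarrow> (nat \<Rightarrow> nat) \<Rightarrow> vert set" where
  "verts r k s = {Lv l | l. 1 \<le> l \<and> l \<le> r} \<union> {Av i j | i j. 1 \<le> i \<and> i \<le> k \<and> j \<le> s i}"

fun nedges :: "vert \<Rightarrow> vert \<Rightarrow> int" where
  "nedges (Lv l) (Av i j) = (if j = 0 then 1 else 0)"
| "nedges (Av i j) (Lv l) = (if j = 0 then 1 else 0)"
| "nedges (Lv l) (Lv l') = 0"
| "nedges (Av i j) (Av i' j') = (if i = i' \<and> (j = Suc j' \<or> j' = Suc j) then 1 else 0)"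

definition cartan :: "vert \<Rightarrow> vert \<Rightarrow> int" where
  "cartan a b = (if a = b then 2 else - nedges a b)"

definition bform :: "nat \<Rightarrow> nat \<Rightarrow> (nat \<Rightarrow> nat) \<Rightarrow> vec \<Rightarrow> vec \<Rightarrow> int" where
  "bform r k s x y = (\<Sum>a\<in>verts r k s. \<Sum>b\<in>verts r k s. x a * y b * cartan a b)"

definition evec :: "vert \<Rightarrow> vec" where
  "evec a = (\<lambda>b. if b = a then 1 else 0)"

definition sref :: "nat \<Rightarrow> nat \<Rightarrow> (nat \<Rightarrow> nat) \<Rightarrow> vert \<Rightarrow> vec \<Rightarrow> vec" where
  "sref r k s a x = (\<lambda>b. x b - bform r k s x (evec a) * evec a b)"

inductive weyl :: "nat \<Rightarrow> nat \<Rightarrow> (nat \<Rightarrow> nat) \<Rightarrow> (vec \<Rightarrow> vec) \<Rightarrow> bool"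
  for r k s where
  weyl_id: "weyl r k s id"
| weyl_step: "weyl r k s w \<Longrightarrow> a \<in> verts r k s \<Longrightarrow> weyl r k s (sref r k s a \<circ> w)"

definition supp :: "vec \<Rightarrow> vert set" where
  "supp x = {a. x a \<noteq> 0}"

definition connected_supp :: "vec \<Rightarrow> bool" where
  "connected_supp x = (\<forall>a\<in>supp x. \<forall>b\<in>supp x.
     (a, b) \<in> ({(c, d). c \<in> supp x \<and> d \<in> supp x \<and> c \<noteq> d \<and> nedges c d \<noteq> 0})\<^sup>*)"

definition fund_imag :: "nat \<Rightarrow> nat \<Rightarrow> (nat \<Rightarrow> nat) \<Rightarrow> vec \<Rightarrow> bool" where
  "fund_imag r k s \<delta> = ((\<forall>a. a \<notin> verts r k s \<longrightarrow> \<delta> a = 0) \<and> (\<forall>a. \<delta> a \<ge> 0) \<and> \<delta> \<noteq> (\<lambda>_. 0)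
      \<and> connected_supp \<delta> \<and> (\<forall>a\<in>verts r k s. bform r k s (evec a) \<delta> \<le> 0))"

definition imaginary_root :: "nat \<Rightarrow> nat \<Rightarrow> (nat \<Rightarrow> nat) \<Rightarrow> vec \<Rightarrow> bool" where
  "imaginary_root r k s v = (\<exists>w \<delta>. weyl r k s w \<and> fund_imag r k s \<delta> \<and> (v = w \<delta> \<or> v = (\<lambda>a. - w \<delta> a)))"

text \<open>mu i f = \<mu>^i_f, for 1 \<le> i \<le> k, 1 \<le> f \<le> s_i+1.\<close>
definition psize :: "(nat \<Rightarrow> nat \<Rightarrow> nat) \<Rightarrow> (nat \<Rightarrow> nat) \<Rightarrow> nat \<Rightarrow> nat" where
  "psize mu s i = (\<Sum>f=1..s i + 1. mu i f)"

definition is_partition_tuple :: "nat \<Rightarrow> (nat \<Rightarrow> nat) \<Rightarrow> (nat \<Rightarrow> nat \<Rightarrow> nat) \<Rightarrow> bool" where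
  "is_partition_tuple k s mu = (\<forall>i. 1 \<le> i \<and> i \<le> k \<longrightarrow>
      (\<forall>f g. 1 \<le> f \<and> f \<le> g \<and> g \<le> s i + 1 \<longrightarrow> mu i g \<le> mu i f) \<and> psize mu s i \<noteq> 0)"

definition vmu :: "nat \<Rightarrow> nat \<Rightarrow> (nat \<Rightarrow> nat) \<Rightarrow> (nat \<Rightarrow> nat \<Rightarrow> nat) \<Rightarrow> vec" where
  "vmu r k s mu = (\<lambda>a. if a \<notin> verts r k s then 0 else
     (case a of Lv l \<Rightarrow> 1
      | Av i j \<Rightarrow> int (psize mu s i) - (\<Sum>f=1..j. int (mu i f))))"

end

theory Submission
  imports Defs
begin


lemma nedges_sym: "nedges a b = nedges b a"
  by (cases a; cases b) auto

lemma cartan_sym: "cartan a b = cartan b a"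
  unfolding cartan_def using nedges_sym by auto

lemma nedges_01: "nedges a b = 0 \<or> nedges a b = 1"
  by (cases a; cases b) auto

lemma finite_verts: "finite (verts r k s)"
proof -
  have "verts r k s = Lv ` {1..r} \<union> (\<Union>i\<in>{1..k}. Av i ` {..s i})"
    unfolding verts_def by auto
  thus ?thesis by simp
qed

context fixes r k :: nat and s :: "nat \<Rightarrow> nat" begin

lemma bform_sym: "bform r k s x y = bform r k s y x"
  unfolding bform_def
  by (subst sum.swap) (simp add: cartan_sym mult_ac)

lemma bform_evec2: "a \<in> verts r k s \<Longrightarrow> bform r k s x (evec a) = (\<Sum>c\<in>verts r k s. x c * cartan c a)"
proof -
  assume a: "a \<in> verts r k s"
  have "\<And>c. (\<Sum>b\<in>verts r k s. x c * evec a b * cartan c b) = x c * cartan c a"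
  proof -
    fix c
    have "(\<Sum>b\<in>verts r k s. x c * evec a b * cartan c b) = (\<Sum>b\<in>verts r k s. if b = a then x c * cartan c a else 0)"
      by (rule sum.cong) (auto simp: evec_def)
    also have "\<dots> = x c * cartan c a" using a finite_verts by simp
    finally show "(\<Sum>b\<in>verts r k s. x c * evec a b * cartan c b) = x c * cartan c a" .
  qed
  thus ?thesis unfolding bform_def by simp
qed

lemma bform_ee: "a \<in> verts r k s \<Longrightarrow> b \<in> verts r k s \<Longrightarrow> bform r k s (evec a) (evec b) = cartan a b"
proof -
  assume a: "a \<in> verts r k s" "b \<in> verts r k s"
  have "bform r k s (evec a) (evec b) = (\<Sum>c\<in>verts r k s. if c = a then cartan a b else 0)"
    unfolding bform_evec2[OF a(2)] by (rule sum.cong) (auto simp: evec_def)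
  thus ?thesis using a finite_verts by simp
qed

lemma bform_lin: "bform r k s (\<lambda>c. p * y c + q * z c) w = p * bform r k s y w + q * bform r k s z w"
  unfolding bform_def
  by (simp add: algebra_simps sum.distrib sum_distrib_left)

lemma bform_lin2: "a \<in> verts r k s \<Longrightarrow> d \<in> verts r k s \<Longrightarrow>
   bform r k s (\<lambda>c. x c - t * evec d c) (evec a) = bform r k s x (evec a) - t * cartan d a"
proof -
  assume a: "a \<in> verts r k s" "d \<in> verts r k s"
  have "bform r k s (\<lambda>c. x c - t * evec d c) (evec a) = bform r k s (\<lambda>c. 1 * x c + (-t) * evec d c) (evec a)"
    by simp
  also have "\<dots> = bform r k s x (evec a) - t * cartan d a"
    using a by (subst bform_lin) (simp add: bform_ee)
  finally show ?thesis .
qed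

lemma sref_inv: "a \<in> verts r k s \<Longrightarrow> sref r k s a (sref r k s a x) = x"
  unfolding sref_def
  by (simp add: bform_lin2 cartan_def)

lemma sref_comm: "a \<in> verts r k s \<Longrightarrow> b \<in> verts r k s \<Longrightarrow> cartan a b = 0 \<Longrightarrow>
   sref r k s a (sref r k s b x) = sref r k s b (sref r k s a x)"
  unfolding sref_def
  apply (simp add: bform_lin2 cartan_sym[of b a])
  by (simp add: algebra_simps)

lemma sref_braid: "a \<in> verts r k s \<Longrightarrow> b \<in> verts r k s \<Longrightarrow> cartan a b = -1 \<Longrightarrow>
   sref r k s a (sref r k s b (sref r k s a x)) = sref r k s b (sref r k s a (sref r k s b x))"
  unfolding sref_def
  apply (simp add: bform_lin2 cartan_sym[of b a] cartan_def[of a a] cartan_def[of b b])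
  by (simp add: algebra_simps fun_eq_iff)

lemma sref_lin: "sref r k s a (\<lambda>c. p * y c + q * z c) = (\<lambda>c. p * sref r k s a y c + q * sref r k s a z c)"
  unfolding sref_def by (simp add: bform_lin algebra_simps)

lemma sref_evec: "a \<in> verts r k s \<Longrightarrow> d \<in> verts r k s \<Longrightarrow>
   sref r k s d (evec a) = (\<lambda>c. evec a c - cartan a d * evec d c)"
  unfolding sref_def by (simp add: bform_ee)

end


context fixes r k :: nat and s :: "nat \<Rightarrow> nat" begin

primrec ev :: "vert list \<Rightarrow> vec \<Rightarrow> vec" where
  "ev [] = id"
| "ev (a # u) = sref r k s a \<circ> ev u"

lemma ev_append: "ev (u @ u') = ev u \<circ> ev u'"
  by (induction u) auto

lemma ev_lin: "ev u (\<lambda>c. p * y c + q * z c) = (\<lambda>c. p * ev u y c + q * ev u z c)"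
  by (induction u) (auto simp: sref_lin)

lemma ev_snoc: "ev (u @ [a]) = ev u \<circ> sref r k s a"
  by (simp add: ev_append)

lemma canon0:
  assumes V: "a \<in> verts r k s" "b \<in> verts r k s" and c0: "cartan a b = 0"
  shows "set u \<subseteq> {a, b} \<Longrightarrow> \<exists>c\<in>{[],[a],[b],[a,b]}. ev u = ev c \<and> length c \<le> length u"
proof (induction u)
  case Nil
  then show ?case by auto
next
  case (Cons x u)
  have "set u \<subseteq> {a, b}" using Cons.prems by simp
  then obtain c where c: "c\<in>{[],[a],[b],[a,b]}" "ev u = ev c" "length c \<le> length u" using Cons.IH by blast
  have x: "x = a \<or> x = b" using Cons.prems by auto
  have inv: "\<And>d y. d \<in> verts r k s \<Longrightarrow> sref r k s d (sref r k s d y) = y" by (rule sref_inv)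
  have cm: "\<And>y. sref r k s b (sref r k s a y) = sref r k s a (sref r k s b y)"
    using sref_comm[OF V c0] by simp
  have ev: "ev (x # u) = sref r k s x \<circ> ev c" using c by simp
  have ia: "\<And>y. sref r k s a (sref r k s a y) = y" and ib: "\<And>y. sref r k s b (sref r k s b y) = y"
    using inv V by auto
  have step: "\<exists>c'\<in>{[],[a],[b],[a,b]}. sref r k s x \<circ> ev c = ev c' \<and> length c' \<le> Suc (length c)"
  proof -
    consider "x = a" "c = []" | "x = a" "c = [a]" | "x = a" "c = [b]" | "x = a" "c = [a,b]"
      | "x = b" "c = []" | "x = b" "c = [a]" | "x = b" "c = [b]" | "x = b" "c = [a,b]"
      using x c by auto
    then show ?thesis
    proof cases
      case 1 thus ?thesis by (intro bexI[of _ "[a]"]) auto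
    next
      case 2 thus ?thesis by (intro bexI[of _ "[]"]) (auto simp: fun_eq_iff ia)
    next
      case 3 thus ?thesis by (intro bexI[of _ "[a,b]"]) auto
    next
      case 4 thus ?thesis by (intro bexI[of _ "[b]"]) (auto simp: fun_eq_iff ia)
    next
      case 5 thus ?thesis by (intro bexI[of _ "[b]"]) auto
    next
      case 6 thus ?thesis by (intro bexI[of _ "[a,b]"]) (auto simp: fun_eq_iff cm)
    next
      case 7 thus ?thesis by (intro bexI[of _ "[]"]) (auto simp: fun_eq_iff ib)
    next
      case 8 thus ?thesis by (intro bexI[of _ "[a]"]) (auto simp: fun_eq_iff cm ib)
    qed
  qed
  then obtain c' where c': "c'\<in>{[],[a],[b],[a,b]}" "sref r k s x \<circ> ev c = ev c'" "length c' \<le> Suc (length c)" by blast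
  show ?case
  proof (rule bexI[OF _ c'(1)])
    show "ev (x # u) = ev c' \<and> length c' \<le> length (x # u)" using ev c'(2,3) c(3) by simp
  qed
qed

lemma canon1:
  assumes V: "a \<in> verts r k s" "b \<in> verts r k s" and c1: "cartan a b = -1"
  shows "set u \<subseteq> {a, b} \<Longrightarrow> \<exists>c\<in>{[],[a],[b],[a,b],[b,a],[a,b,a]}. ev u = ev c \<and> length c \<le> length u"
proof (induction u)
  case Nil
  then show ?case by auto
next
  case (Cons x u)
  have "set u \<subseteq> {a, b}" using Cons.prems by simp
  then obtain c where c: "c\<in>{[],[a],[b],[a,b],[b,a],[a,b,a]}" "ev u = ev c" "length c \<le> length u" using Cons.IH by blast
  have x: "x = a \<or> x = b" using Cons.prems by auto
  have inv: "\<And>d y. d \<in> verts r k s \<Longrightarrow> sref r k s d (sref r k s d y) = y" by (rule sref_inv)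
  have br: "\<And>y. sref r k s b (sref r k s a (sref r k s b y)) = sref r k s a (sref r k s b (sref r k s a y))"
    using sref_braid[OF V c1] by simp
  have ev: "ev (x # u) = sref r k s x \<circ> ev c" using c by simp
  have ia: "\<And>y. sref r k s a (sref r k s a y) = y" and ib: "\<And>y. sref r k s b (sref r k s b y) = y"
    using inv V by auto
  have step: "\<exists>c'\<in>{[],[a],[b],[a,b],[b,a],[a,b,a]}. sref r k s x \<circ> ev c = ev c' \<and> length c' \<le> Suc (length c)"
  proof -
    consider "x = a" "c = []" | "x = a" "c = [a]" | "x = a" "c = [b]" | "x = a" "c = [a,b]" | "x = a" "c = [b,a]" | "x = a" "c = [a,b,a]"
      | "x = b" "c = []" | "x = b" "c = [a]" | "x = b" "c = [b]" | "x = b" "c = [a,b]" | "x = b" "c = [b,a]" | "x = b" "c = [a,b,a]"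
      using x c by auto
    then show ?thesis
    proof cases
      case 1 thus ?thesis by (intro bexI[of _ "[a]"]) auto
    next
      case 2 thus ?thesis by (intro bexI[of _ "[]"]) (auto simp: fun_eq_iff ia)
    next
      case 3 thus ?thesis by (intro bexI[of _ "[a,b]"]) auto
    next
      case 4 thus ?thesis by (intro bexI[of _ "[b]"]) (auto simp: fun_eq_iff ia)
    next
      case 5 thus ?thesis by (intro bexI[of _ "[a,b,a]"]) auto
    next
      case 6 thus ?thesis by (intro bexI[of _ "[b,a]"]) (auto simp: fun_eq_iff ia)
    next
      case 7 thus ?thesis by (intro bexI[of _ "[b]"]) auto
    next
      case 8 thus ?thesis by (intro bexI[of _ "[b,a]"]) auto
    next
      case 9 thus ?thesis by (intro bexI[of _ "[]"]) (auto simp: fun_eq_iff ib)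
    next
      case 10 thus ?thesis by (intro bexI[of _ "[a,b,a]"]) (auto simp: fun_eq_iff br)
    next
      case 11 thus ?thesis by (intro bexI[of _ "[a]"]) (auto simp: fun_eq_iff ib)
    next
      case 12 thus ?thesis by (intro bexI[of _ "[a,b]"]) (auto simp: fun_eq_iff br ia)
    qed
  qed
  then obtain c' where c': "c'\<in>{[],[a],[b],[a,b],[b,a],[a,b,a]}" "sref r k s x \<circ> ev c = ev c'" "length c' \<le> Suc (length c)" by blast
  show ?case
  proof (rule bexI[OF _ c'(1)])
    show "ev (x # u) = ev c' \<and> length c' \<le> length (x # u)" using ev c'(2,3) c(3) by simp
  qed
qed

lemma dihedral:
  assumes V: "a \<in> verts r k s" "b \<in> verts r k s" "a \<noteq> b" and u: "set u \<subseteq> {a, b}"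
  shows "(\<exists>p q. p \<ge> 0 \<and> q \<ge> 0 \<and> ev u (evec a) = (\<lambda>c. p * evec a c + q * evec b c))
     \<or> (\<exists>u'. set u' \<subseteq> {a, b} \<and> length u' < length u \<and> ev u' = ev u \<circ> sref r k s a)"
proof -
  have inv: "\<And>d y. d \<in> verts r k s \<Longrightarrow> sref r k s d (sref r k s d y) = y" by (rule sref_inv)
  have ca: "cartan a b = 0 \<or> cartan a b = -1"
    using V nedges_01[of a b] by (auto simp: cartan_def)
  have ee: "\<And>d e. d \<in> verts r k s \<Longrightarrow> e \<in> verts r k s \<Longrightarrow> sref r k s d (evec e) = (\<lambda>c. evec e c - cartan e d * evec d c)"
    by (rule sref_evec)
  have caa: "cartan a a = 2" by (simp add: cartan_def)
  show ?thesis
  proof (cases "cartan a b = 0")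
    case True
    have cm: "\<And>y. sref r k s b (sref r k s a y) = sref r k s a (sref r k s b y)"
      using sref_comm[OF V(1,2) True] by simp
    obtain c where c: "c\<in>{[],[a],[b],[a,b]}" "ev u = ev c" "length c \<le> length u"
      using canon0[OF V(1,2) True u] by blast
    consider "c = []" | "c = [b]" | "c = [a]" | "c = [a,b]" using c(1) by blast
    then show ?thesis
    proof cases
      case 1 thus ?thesis using c
        by (intro disjI1 exI[of _ 1] exI[of _ 0]) simp
    next
      case 2 thus ?thesis using c V \<open>cartan a b = 0\<close>
        by (intro disjI1 exI[of _ 1] exI[of _ 0]) (simp add: ee)
    next
      case 3 thus ?thesis using c V
        by (intro disjI2 exI[of _ "[]"]) (simp add: fun_eq_iff inv; cases u; simp)
    next
      case 4 thus ?thesis using c V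
        by (intro disjI2 exI[of _ "[b]"]) (simp add: fun_eq_iff inv cm; cases u; simp)
    qed
  next
    case False
    then have c1: "cartan a b = -1" using ca by simp
    have br: "\<And>y. sref r k s b (sref r k s a (sref r k s b y)) = sref r k s a (sref r k s b (sref r k s a y))"
      using sref_braid[OF V(1,2) c1] by simp
    obtain c where c: "c\<in>{[],[a],[b],[a,b],[b,a],[a,b,a]}" "ev u = ev c" "length c \<le> length u"
      using canon1[OF V(1,2) c1 u] by blast
    consider "c = []" | "c = [b]" | "c = [a,b]" | "c = [a]" | "c = [b,a]" | "c = [a,b,a]" using c(1) by blast
    then show ?thesis
    proof cases
      case 1 thus ?thesis using c
        by (intro disjI1 exI[of _ 1] exI[of _ 0]) simp
    next
      case 2 thus ?thesis using c V c1
        by (intro disjI1 exI[of _ 1] exI[of _ 1]) (simp add: ee)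
    next
      case 3
      have "ev u (evec a) = sref r k s a (\<lambda>c. 1 * evec a c + 1 * evec b c)"
        using 3 c V c1 by (simp add: ee)
      also have "\<dots> = (\<lambda>c. 0 * evec a c + 1 * evec b c)"
        unfolding sref_lin using V c1 caa by (simp add: ee cartan_sym[of b a] fun_eq_iff)
      finally show ?thesis by (intro disjI1 exI[of _ 0] exI[of _ 1]) auto
    next
      case 4 thus ?thesis using c V
          by (intro disjI2 exI[of _ "[]"]) (simp add: fun_eq_iff inv; cases u; simp)
    next
      case 5 thus ?thesis using c V
          by (intro disjI2 exI[of _ "[b]"]) (simp add: fun_eq_iff inv; cases u; simp)
    next
      case 6 thus ?thesis using c V
          by (intro disjI2 exI[of _ "[a,b]"]) (simp add: fun_eq_iff inv; cases u; simp)
    qed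
  qed
qed

end


context fixes r k :: nat and s :: "nat \<Rightarrow> nat" begin

definition hasw :: "(vec \<Rightarrow> vec) \<Rightarrow> bool" where
  "hasw w = (\<exists>u. set u \<subseteq> verts r k s \<and> ev r k s u = w)"

definition wlen :: "(vec \<Rightarrow> vec) \<Rightarrow> nat" where
  "wlen w = (LEAST n. \<exists>u. set u \<subseteq> verts r k s \<and> length u = n \<and> ev r k s u = w)"

lemma wlen_le: "set u \<subseteq> verts r k s \<Longrightarrow> wlen (ev r k s u) \<le> length u"
  unfolding wlen_def by (rule Least_le) auto

lemma wlen_ex: "hasw w \<Longrightarrow> \<exists>u. set u \<subseteq> verts r k s \<and> length u = wlen w \<and> ev r k s u = w"
  unfolding wlen_def hasw_def by (rule LeastI_ex) auto

lemma hasw_comp: "hasw w \<Longrightarrow> set u \<subseteq> verts r k s \<Longrightarrow> hasw (w \<circ> ev r k s u)"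
proof -
  assume h: "hasw w" "set u \<subseteq> verts r k s"
  then obtain u0 where "set u0 \<subseteq> verts r k s" "ev r k s u0 = w" unfolding hasw_def by blast
  then show ?thesis unfolding hasw_def using h(2)
    by (intro exI[of _ "u0 @ u"]) (simp add: ev_append)
qed

lemma wlen_comp: "hasw w \<Longrightarrow> set u \<subseteq> verts r k s \<Longrightarrow> wlen (w \<circ> ev r k s u) \<le> wlen w + length u"
proof -
  assume h: "hasw w" "set u \<subseteq> verts r k s"
  obtain u0 where u0: "set u0 \<subseteq> verts r k s" "length u0 = wlen w" "ev r k s u0 = w" using wlen_ex[OF h(1)] by blast
  have "wlen (w \<circ> ev r k s u) = wlen (ev r k s (u0 @ u))" using u0 by (simp add: ev_append)
  also have "\<dots> \<le> length (u0 @ u)" using u0 h by (intro wlen_le) auto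
  finally show ?thesis using u0 by simp
qed

lemma wlen_comp1: "hasw w \<Longrightarrow> a \<in> verts r k s \<Longrightarrow> wlen (w \<circ> sref r k s a) \<le> wlen w + 1"
  using wlen_comp[of w "[a]"] by simp

lemma hasw_comp1: "hasw w \<Longrightarrow> a \<in> verts r k s \<Longrightarrow> hasw (w \<circ> sref r k s a)"
  using hasw_comp[of w "[a]"] by simp

lemma wlen0: "hasw w \<Longrightarrow> wlen w = 0 \<Longrightarrow> w = id"
  using wlen_ex[of w] by auto

lemma hasw_ev: "hasw w \<Longrightarrow> \<exists>u. w = ev r k s u" unfolding hasw_def by auto

lemma wlen_split:
  assumes "hasw w" "wlen w = Suc m"
  shows "\<exists>w' b. hasw w' \<and> b \<in> verts r k s \<and> w = w' \<circ> sref r k s b \<and> wlen w' = m"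
proof -
  obtain u where u: "set u \<subseteq> verts r k s" "length u = Suc m" "ev r k s u = w" using wlen_ex[OF assms(1)] assms(2) by auto
  then obtain u0 b where ub: "u = u0 @ [b]" by (metis length_Suc_conv_rev)
  have h0: "hasw (ev r k s u0)" using u ub unfolding hasw_def by auto
  have b: "b \<in> verts r k s" using u ub by auto
  have w: "w = ev r k s u0 \<circ> sref r k s b" using u ub by (simp add: ev_snoc)
  have le: "wlen (ev r k s u0) \<le> m" using wlen_le[of u0] u ub by auto
  have "Suc m \<le> wlen (ev r k s u0) + 1" using wlen_comp1[OF h0 b] w assms(2) by simp
  with le have "wlen (ev r k s u0) = m" by simp
  thus ?thesis using h0 b w by blast
qed

lemma hasw_lin: "hasw w \<Longrightarrow> w (\<lambda>c. p * y c + q * z c) = (\<lambda>c. p * w y c + q * w z c)"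
proof -
  assume "hasw w"
  then obtain u where "w = ev r k s u" using hasw_ev by blast
  then show ?thesis by (simp add: ev_lin)
qed

lemma comp_sref_sref: "a \<in> verts r k s \<Longrightarrow> w \<circ> sref r k s a \<circ> sref r k s a = w"
  by (simp add: fun_eq_iff sref_inv)

theorem posroot:
  "\<forall>w a. hasw w \<longrightarrow> wlen w = n \<longrightarrow> a \<in> verts r k s \<longrightarrow> wlen w \<le> wlen (w \<circ> sref r k s a)
     \<longrightarrow> (\<forall>c. 0 \<le> w (evec a) c)"
proof (induction n rule: less_induct)
  case (less n)
  show ?case
  proof (rule allI, rule allI, intro impI)
    fix w a
    assume hw: "hasw w" and ln: "wlen w = n" and aV: "a \<in> verts r k s" and lg: "wlen w \<le> wlen (w \<circ> sref r k s a)"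
    show "\<forall>c. 0 \<le> w (evec a) c"
    proof (cases n)
      case 0
      then have "w = id" using wlen0 hw ln by simp
      then show ?thesis by (simp add: evec_def)
    next
      case (Suc m)
      obtain w0 b where wb: "hasw w0" "b \<in> verts r k s" "w = w0 \<circ> sref r k s b" "wlen w0 = m"
        using wlen_split[OF hw] ln Suc by blast
      have "w \<circ> sref r k s b = w0" using wb comp_sref_sref by simp
      then have "a \<noteq> b" using lg ln Suc wb by auto
      define P where "P m' = (\<exists>v uI. hasw v \<and> set uI \<subseteq> {a, b} \<and> v \<circ> ev r k s uI = w
                 \<and> wlen w = wlen v + length uI \<and> wlen v = m')" for m'
      have Pm: "P m" unfolding P_def
        by (rule exI[of _ w0], rule exI[of _ "[b]"]) (use wb ln Suc in auto)
      define m0 where "m0 = (LEAST m'. P m')"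
      have Pm0: "P m0" unfolding m0_def using Pm by (rule LeastI)
      have m0le: "m0 \<le> m" unfolding m0_def using Pm by (rule Least_le)
      obtain v uI where vu: "hasw v" "set uI \<subseteq> {a, b}" "v \<circ> ev r k s uI = w"
          "wlen w = wlen v + length uI" "wlen v = m0"
        using Pm0 unfolding P_def by blast
      have abV: "{a, b} \<subseteq> verts r k s" using aV wb by auto
      have uIV: "set uI \<subseteq> verts r k s" using vu abV by auto
      have claim: "wlen v \<le> wlen (v \<circ> sref r k s d)" if d: "d \<in> {a, b}" for d
      proof (rule ccontr)
        assume "\<not> wlen v \<le> wlen (v \<circ> sref r k s d)"
        then have lt: "wlen (v \<circ> sref r k s d) < wlen v" by simp
        have dV: "d \<in> verts r k s" using d abV by auto
        have hv': "hasw (v \<circ> sref r k s d)" using hasw_comp1[OF vu(1) dV] .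
        have eq: "(v \<circ> sref r k s d) \<circ> ev r k s (d # uI) = w"
          using vu(3) dV by (simp add: fun_eq_iff sref_inv)
        have dset: "set (d # uI) \<subseteq> verts r k s" using dV uIV by auto
        have "wlen w \<le> wlen (v \<circ> sref r k s d) + length (d # uI)"
          using wlen_comp[OF hv' dset] eq by simp
        then have eqw: "wlen w = wlen (v \<circ> sref r k s d) + length (d # uI)"
          using lt vu(4) by simp
        have "P (wlen (v \<circ> sref r k s d))" unfolding P_def
          by (rule exI[of _ "v \<circ> sref r k s d"], rule exI[of _ "d # uI"]) (use hv' d vu eq eqw in auto)
        then have "m0 \<le> wlen (v \<circ> sref r k s d)" unfolding m0_def by (rule Least_le)
        thus False using lt vu(5) by simp
      qed
      have m0n: "m0 < n" using m0le Suc by simp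
      have pa: "\<forall>c. 0 \<le> v (evec a) c"
        using less.IH[OF m0n] vu(1,5) aV claim[of a] by blast
      have pb: "\<forall>c. 0 \<le> v (evec b) c"
        using less.IH[OF m0n] vu(1,5) wb(2) claim[of b] by blast
      have dh: "(\<exists>p q. p \<ge> 0 \<and> q \<ge> 0 \<and> ev r k s uI (evec a) = (\<lambda>c. p * evec a c + q * evec b c))
     \<or> (\<exists>u'. set u' \<subseteq> {a, b} \<and> length u' < length uI \<and> ev r k s u' = ev r k s uI \<circ> sref r k s a)"
        by (rule dihedral[OF aV wb(2) \<open>a \<noteq> b\<close> vu(2)])
      show ?thesis
      using dh proof (elim disjE)
        assume "\<exists>p q. p \<ge> 0 \<and> q \<ge> 0 \<and> ev r k s uI (evec a) = (\<lambda>c. p * evec a c + q * evec b c)"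
        then obtain p q where pq: "p \<ge> 0" "q \<ge> 0" "ev r k s uI (evec a) = (\<lambda>c. p * evec a c + q * evec b c)" by blast
        have "w (evec a) = v (ev r k s uI (evec a))" using vu(3) by auto
        also have "\<dots> = (\<lambda>c. p * v (evec a) c + q * v (evec b) c)" using pq(3) hasw_lin[OF vu(1)] by simp
        finally show ?thesis using pa pb pq by simp
      next
        assume "\<exists>u'. set u' \<subseteq> {a, b} \<and> length u' < length uI \<and> ev r k s u' = ev r k s uI \<circ> sref r k s a"
        then obtain u' where u': "set u' \<subseteq> {a, b}" "length u' < length uI" "ev r k s u' = ev r k s uI \<circ> sref r k s a" by blast
        have "w \<circ> sref r k s a = v \<circ> ev r k s u'" by (simp add: vu(3)[symmetric] u'(3) comp_assoc)
        moreover have "set u' \<subseteq> verts r k s" using u' abV by auto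
        ultimately have "wlen (w \<circ> sref r k s a) \<le> wlen v + length u'" using wlen_comp[OF vu(1)] by simp
        then show ?thesis using u'(2) vu(4) lg by simp
      qed
    qed
  qed
qed

theorem fund_pos:
  assumes pos: "\<forall>c. 0 \<le> \<delta> c" and neg: "\<forall>a\<in>verts r k s. bform r k s (evec a) \<delta> \<le> 0"
  shows "\<forall>w. hasw w \<longrightarrow> wlen w = n \<longrightarrow> (\<forall>c. 0 \<le> w \<delta> c)"
proof (induction n rule: less_induct)
  case (less n)
  show ?case
  proof (rule allI, intro impI)
    fix w
    assume hw: "hasw w" and ln: "wlen w = n"
    show "\<forall>c. 0 \<le> w \<delta> c"
    proof (cases n)
      case 0
      then have "w = id" using wlen0 hw ln by simp
      then show ?thesis using pos by simp
    next
      case (Suc m)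
      obtain w0 b where wb: "hasw w0" "b \<in> verts r k s" "w = w0 \<circ> sref r k s b" "wlen w0 = m"
        using wlen_split[OF hw] ln Suc by blast
      have "\<forall>c. 0 \<le> w0 (evec b) c"
        using posroot[of m] wb ln Suc by simp
      moreover have "\<forall>c. 0 \<le> w0 \<delta> c" using less.IH[of m] Suc wb by simp
      moreover have t: "bform r k s \<delta> (evec b) \<le> 0" using neg wb(2) bform_sym by metis
      moreover have "w \<delta> = (\<lambda>c. 1 * w0 \<delta> c + (- bform r k s \<delta> (evec b)) * w0 (evec b) c)"
      proof -
        have "w \<delta> = w0 (\<lambda>c. 1 * \<delta> c + (- bform r k s \<delta> (evec b)) * evec b c)"
          using wb(3) unfolding sref_def by simp
        also have "\<dots> = (\<lambda>c. 1 * w0 \<delta> c + (- bform r k s \<delta> (evec b)) * w0 (evec b) c)"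
          by (rule hasw_lin[OF wb(1)])
        finally show ?thesis .
      qed
      ultimately show ?thesis
      proof (intro allI)
        fix c
        assume h: "\<forall>c. 0 \<le> w0 (evec b) c" "\<forall>c. 0 \<le> w0 \<delta> c" "bform r k s \<delta> (evec b) \<le> 0"
          "w \<delta> = (\<lambda>c. 1 * w0 \<delta> c + (- bform r k s \<delta> (evec b)) * w0 (evec b) c)"
        have "0 \<le> (- bform r k s \<delta> (evec b)) * w0 (evec b) c" using h by (intro mult_nonneg_nonneg) auto
        moreover have "0 \<le> w0 \<delta> c" using h by simp
        ultimately show "0 \<le> w \<delta> c" using h(4) by simp
      qed
    qed
  qed
qed

end


lemma Lv_in: "Lv l \<in> verts r k s \<longleftrightarrow> 1 \<le> l \<and> l \<le> r"
  unfolding verts_def by auto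

lemma Av_in: "Av i j \<in> verts r k s \<longleftrightarrow> 1 \<le> i \<and> i \<le> k \<and> j \<le> s i"
  unfolding verts_def by auto

lemma cartan_Av:
  assumes "c \<in> verts r k s"
  shows "cartan c (Av i j) = (if c = Av i j then 2 else 0) - (if j = 0 \<and> c \<in> Lv ` {1..r} then 1 else 0)
     - (if j \<noteq> 0 \<and> c = Av i (j - 1) then 1 else 0) - (if c = Av i (Suc j) then 1 else 0)"
proof (cases c)
  case (Lv l)
  then have "l \<in> {1..r}" using assms by (simp add: Lv_in)
  then show ?thesis using Lv by (simp add: cartan_def image_iff)
next
  case (Av i' j')
  have nl: "Av i' j' \<notin> Lv ` {1..r}" by auto
  have e1: "(j \<noteq> 0 \<and> Av i' j' = Av i (j - 1)) = (i' = i \<and> j = Suc j')" by auto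
  show ?thesis unfolding Av cartan_def using nl e1
    by (simp only: nedges.simps vert.inject) auto
qed

lemma coefA:
  assumes i: "1 \<le> i" "i \<le> k" and j: "j \<le> s i"
  shows "bform r k s x (evec (Av i j)) = 2 * x (Av i j)
     - (if j = 0 then (\<Sum>l=1..r. x (Lv l)) else x (Av i (j - 1)))
     - (if Suc j \<le> s i then x (Av i (Suc j)) else 0)"
proof -
  let ?V = "verts r k s"
  have fin: "finite ?V" by (rule finite_verts)
  have aV: "Av i j \<in> ?V" using i j by (simp add: Av_in)
  have "bform r k s x (evec (Av i j)) = (\<Sum>c\<in>?V. x c * cartan c (Av i j))"
    by (rule bform_evec2[OF aV])
  also have "\<dots> = (\<Sum>c\<in>?V. (if c = Av i j then 2 * x c else 0) - (if j = 0 \<and> c \<in> Lv ` {1..r} then x c else 0)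
     - (if j \<noteq> 0 \<and> c = Av i (j - 1) then x c else 0) - (if c = Av i (Suc j) then x c else 0))"
    by (rule sum.cong) (auto simp: cartan_Av algebra_simps)
  also have "\<dots> = (\<Sum>c\<in>?V. if c = Av i j then 2 * x c else 0) - (\<Sum>c\<in>?V. if j = 0 \<and> c \<in> Lv ` {1..r} then x c else 0)
     - (\<Sum>c\<in>?V. if j \<noteq> 0 \<and> c = Av i (j - 1) then x c else 0) - (\<Sum>c\<in>?V. if c = Av i (Suc j) then x c else 0)"
    by (simp add: sum_subtractf)
  also have "(\<Sum>c\<in>?V. if c = Av i j then 2 * x c else 0) = 2 * x (Av i j)"
    using fin aV by simp
  also have "(\<Sum>c\<in>?V. if j = 0 \<and> c \<in> Lv ` {1..r} then x c else 0) = (if j = 0 then (\<Sum>l=1..r. x (Lv l)) else 0)"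
  proof (cases "j = 0")
    case True
    have sub: "Lv ` {1..r} \<subseteq> ?V" by (auto simp: Lv_in)
    have "(\<Sum>c\<in>?V. if c \<in> Lv ` {1..r} then x c else 0) = (\<Sum>c\<in>?V \<inter> Lv ` {1..r}. x c)"
      using fin by (simp add: sum.inter_restrict)
    also have "?V \<inter> Lv ` {1..r} = Lv ` {1..r}" using sub by auto
    also have "(\<Sum>c\<in>Lv ` {1..r}. x c) = (\<Sum>l=1..r. x (Lv l))"
      by (subst sum.reindex) (auto simp: inj_on_def)
    finally show ?thesis using True by simp
  qed simp
  also have "(\<Sum>c\<in>?V. if j \<noteq> 0 \<and> c = Av i (j - 1) then x c else 0) = (if j \<noteq> 0 then x (Av i (j - 1)) else 0)"
  proof (cases "j = 0")
    case False
    have "Av i (j - 1) \<in> ?V" using i j by (simp add: Av_in)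
    then show ?thesis using fin False by simp
  qed simp
  also have "(\<Sum>c\<in>?V. if c = Av i (Suc j) then x c else 0) = (if Suc j \<le> s i then x (Av i (Suc j)) else 0)"
    using fin i by (simp add: Av_in)
  finally show ?thesis by simp
qed

primrec chainw :: "nat \<Rightarrow> nat \<Rightarrow> vert list" where
  "chainw i 0 = []"
| "chainw i (Suc j) = Av i j # chainw i j"

lemma chainw_set: "1 \<le> i \<Longrightarrow> i \<le> k \<Longrightarrow> j \<le> Suc (s i) \<Longrightarrow> set (chainw i j) \<subseteq> verts r k s"
  by (induction j) (auto simp: Av_in)

lemma chain_val:
  assumes i: "1 \<le> i" "i \<le> k"
    and xL: "\<And>l. 1 \<le> l \<Longrightarrow> l \<le> r \<Longrightarrow> x0 (Lv l) = 1"
    and x0: "x0 (Av i 0) = int n"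
    and xout: "\<And>t. t > s i \<Longrightarrow> x0 (Av i t) = 0"
  shows "j \<le> Suc (s i) \<Longrightarrow> (\<forall>t<j. ev r k s (chainw i j) x0 (Av i t) = int r + x0 (Av i (Suc t)) - int n)
     \<and> (\<forall>c. (\<forall>t<j. c \<noteq> Av i t) \<longrightarrow> ev r k s (chainw i j) x0 c = x0 c)"
proof (induction j)
  case 0
  then show ?case by simp
next
  case (Suc j)
  let ?y = "ev r k s (chainw i j) x0"
  have IH: "\<forall>t<j. ?y (Av i t) = int r + x0 (Av i (Suc t)) - int n"
           "\<forall>c. (\<forall>t<j. c \<noteq> Av i t) \<longrightarrow> ?y c = x0 c" using Suc by auto
  have js: "j \<le> s i" using Suc.prems by simp
  have ev: "ev r k s (chainw i (Suc j)) x0 = sref r k s (Av i j) ?y" by simp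
  have yj: "?y (Av i j) = x0 (Av i j)" using IH(2) by auto
  have ysj: "?y (Av i (Suc j)) = x0 (Av i (Suc j))" using IH(2) by auto
  have yL: "(\<Sum>l=1..r. ?y (Lv l)) = int r"
  proof -
    have "(\<Sum>l=1..r. ?y (Lv l)) = (\<Sum>l=1..r. (1::int))"
      by (rule sum.cong) (use IH(2) xL in auto)
    thus ?thesis by simp
  qed
  have last: "(if Suc j \<le> s i then ?y (Av i (Suc j)) else 0) = x0 (Av i (Suc j))"
    using ysj xout by auto
  have coef: "bform r k s ?y (evec (Av i j)) = 2 * x0 (Av i j)
     - (if j = 0 then int r else int r + x0 (Av i j) - int n) - x0 (Av i (Suc j))"
  proof (cases j)
    case 0
    then show ?thesis using coefA[where i=i and k=k and s=s and j=j and r=r and x="?y", OF i js] yj yL last by simp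
  next
    case (Suc j')
    have "?y (Av i j') = int r + x0 (Av i j) - int n" using IH(1) Suc by auto
    then show ?thesis using coefA[where i=i and k=k and s=s and j=j and r=r and x="?y", OF i js] yj last Suc by simp
  qed
  show ?case
  proof (intro conjI allI impI)
    fix t assume t: "t < Suc j"
    show "ev r k s (chainw i (Suc j)) x0 (Av i t) = int r + x0 (Av i (Suc t)) - int n"
    proof (cases "t = j")
      case True
      then show ?thesis using coef yj x0 unfolding ev sref_def by (cases j) (auto simp: evec_def)
    next
      case False
      then have "t < j" using t by simp
      then show ?thesis using IH(1) False unfolding ev sref_def by (simp add: evec_def)
    qed
  next
    fix c assume c: "\<forall>t<Suc j. c \<noteq> Av i t"
    then have "c \<noteq> Av i j" by simp
    then show "ev r k s (chainw i (Suc j)) x0 c = x0 c" using IH(2) c unfolding ev sref_def by (simp add: evec_def)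
  qed
qed

lemma weyl_hasw: "weyl r k s w \<Longrightarrow> hasw r k s w"
proof (induction rule: weyl.induct)
  case weyl_id
  then show ?case unfolding hasw_def by (intro exI[of _ "[]"]) simp
next
  case (weyl_step w a)
  then obtain u where "set u \<subseteq> verts r k s" "ev r k s u = w" unfolding hasw_def by blast
  then show ?case unfolding hasw_def using weyl_step by (intro exI[of _ "a # u"]) simp
qed

theorem corollary2p8:
  fixes r k :: nat and s :: "nat \<Rightarrow> nat" and mu :: "nat \<Rightarrow> nat \<Rightarrow> nat"
  assumes "is_partition_tuple k s mu"
    and "imaginary_root r k s (vmu r k s mu)"
  shows "\<forall>i. 1 \<le> i \<and> i \<le> k \<longrightarrow> psize mu s i \<le> r"
proof (intro allI impI)
  fix i assume i: "1 \<le> i \<and> i \<le> k"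
  show "psize mu s i \<le> r"
  proof (rule ccontr)
    assume "\<not> psize mu s i \<le> r"
    then have nr: "r < psize mu s i" by simp
    define n where "n = psize mu s i"
    define v where "v = vmu r k s mu"
    obtain w \<delta> where w: "weyl r k s w" "fund_imag r k s \<delta>" "v = w \<delta> \<or> v = (\<lambda>a. - w \<delta> a)"
      using assms(2) unfolding imaginary_root_def v_def by blast
    have pos: "\<forall>c. 0 \<le> \<delta> c" and neg: "\<forall>a\<in>verts r k s. bform r k s (evec a) \<delta> \<le> 0"
      using w(2) unfolding fund_imag_def by auto
    have fp: "\<And>w'. hasw r k s w' \<Longrightarrow> \<forall>c. 0 \<le> w' \<delta> c"
      using fund_pos[OF pos neg] by blast
    have hw: "hasw r k s w" by (rule weyl_hasw[OF w(1)])
    have xL: "\<And>l. 1 \<le> l \<Longrightarrow> l \<le> r \<Longrightarrow> v (Lv l) = 1"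
      unfolding v_def vmu_def by (simp add: Lv_in)
    have x0: "v (Av i 0) = int n"
      unfolding v_def vmu_def n_def using i by (simp add: Av_in)
    have xout: "\<And>t. t > s i \<Longrightarrow> v (Av i t) = 0"
      unfolding v_def vmu_def by (simp add: Av_in)
    let ?u = "chainw i (Suc (s i))"
    have cv: "ev r k s ?u v (Av i (s i)) = int r + v (Av i (Suc (s i))) - int n"
      using chain_val[of i k r v n s "Suc (s i)", OF _ _ xL x0 xout] i by auto
    then have neg1: "ev r k s ?u v (Av i (s i)) < 0"
      using xout[of "Suc (s i)"] nr n_def by simp
    have uV: "set ?u \<subseteq> verts r k s" using chainw_set[of i k "Suc (s i)" s r] i by simp
    from w(3) show False
    proof
      assume vw: "v = w \<delta>"
      obtain uw where uw: "set uw \<subseteq> verts r k s" "ev r k s uw = w" using hw unfolding hasw_def by blast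
      have "hasw r k s (ev r k s (?u @ uw))" unfolding hasw_def using uV uw by (intro exI[of _ "?u @ uw"]) simp
      then have "\<forall>c. 0 \<le> ev r k s (?u @ uw) \<delta> c" by (rule fp)
      moreover have "ev r k s (?u @ uw) \<delta> = ev r k s ?u v" using vw uw by (simp add: ev_append)
      ultimately show False using neg1 by (metis not_le)
    next
      assume vw: "v = (\<lambda>a. - w \<delta> a)"
      have "0 \<le> w \<delta> (Av i 0)" using fp[OF hw] by simp
      moreover have "v (Av i 0) > 0" using x0 nr n_def by simp
      ultimately show False using vw by simp
    qed
  qed
qed


end
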